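(* Let $R$ be a Noetherian Banach–Tate ring with norm $|\cdot|$ and multiplicative pseudo-uniformizer $\varpi$, and assume there exists a continuous ring homomorphism $\mathbb{Z}_p\to R$. Then there exists a norm $|\cdot|'$ on $R$ such that: $(R,|\cdot|')$ is a Banach–Tate $\mathbb{Z}_p$-algebra; $|\cdot|'$ is bounded-equivalent to $|\cdot|^s$ for some real $s>0$; and $\varpi$ is a multiplicative pseudo-uniformizer for $|\cdot|'$.
   Context: Norms are non-archimedean, submultiplicative, with $|1|=1$ and $|r|=0\iff r=0$. A Banach–Tate ring is a complete normed ring containing a unit $\varpi$ with $|\varpi|<1$ and $|\varpi s|=|\varpi||s|$ for all $s$ (a multiplicative pseudo-uniformizer). A Banach–Tate $\mathbb{Z}_p$-algebra is a Banach–Tate ring $R$ together with a ring homomorphism $\mathbb{Z}_p\to R$ which is norm-decreasing for the usual $p$-adic norm $|x|_p=p^{-\mathrm{ord}_p(x)}$ on $\mathbb{Z}_p$. Two norms $|\cdot|_1,|\cdot|_2$ are bounded-equivalent if there exist $C_1,C_2>0$ with $C_1|r|_1\le|r|_2\le C_2|r|_1$ for all $r$. *)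

theory Defs
  imports Complex_Main "HOL-Computational_Algebra.Primes"
begin

definition is_ring_norm :: "('a::comm_ring_1 \<Rightarrow> real) \<Rightarrow> bool" where
  "is_ring_norm nrm \<longleftrightarrow>
     (\<forall>r. 0 \<le> nrm r) \<and>
     (\<forall>r. nrm r = 0 \<longleftrightarrow> r = 0) \<and>
     (\<forall>r. nrm (- r) = nrm r) \<and>
     (\<forall>r s. nrm (r + s) \<le> max (nrm r) (nrm s)) \<and>
     (\<forall>r s. nrm (r * s) \<le> nrm r * nrm s) \<and>
     nrm 1 = 1"

definition norm_complete :: "('a::comm_ring_1 \<Rightarrow> real) \<Rightarrow> bool" where
  "norm_complete nrm \<longleftrightarrow>
     (\<forall>X :: nat \<Rightarrow> 'a. (\<forall>e>0. \<exists>N. \<forall>m\<ge>N. \<forall>n\<ge>N. nrm (X m - X n) < e) \<longrightarrow>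
        (\<exists>L. (\<lambda>n. nrm (X n - L)) \<longlonglongrightarrow> 0))"

definition mult_pseudo_uniformizer :: "('a::comm_ring_1 \<Rightarrow> real) \<Rightarrow> 'a \<Rightarrow> bool" where
  "mult_pseudo_uniformizer nrm w \<longleftrightarrow>
     w dvd 1 \<and> nrm w < 1 \<and> (\<forall>s. nrm (w * s) = nrm w * nrm s)"

definition banach_tate_ring :: "('a::comm_ring_1 \<Rightarrow> real) \<Rightarrow> bool" where
  "banach_tate_ring nrm \<longleftrightarrow> is_ring_norm nrm \<and> norm_complete nrm \<and>
     (\<exists>w. mult_pseudo_uniformizer nrm w)"

definition bounded_equivalent :: "('a \<Rightarrow> real) \<Rightarrow> ('a \<Rightarrow> real) \<Rightarrow> bool" where
  "bounded_equivalent n1 n2 \<longleftrightarrow>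
     (\<exists>C1 C2. C1 > 0 \<and> C2 > 0 \<and> (\<forall>r. C1 * n1 r \<le> n2 r \<and> n2 r \<le> C2 * n1 r))"

definition ring_ideal :: "'a::comm_ring_1 set \<Rightarrow> bool" where
  "ring_ideal I \<longleftrightarrow> 0 \<in> I \<and> (\<forall>x\<in>I. \<forall>y\<in>I. x + y \<in> I) \<and> (\<forall>r. \<forall>x\<in>I. r * x \<in> I)"

definition finitely_generated_ideal :: "'a::comm_ring_1 set \<Rightarrow> bool" where
  "finitely_generated_ideal I \<longleftrightarrow>
     (\<exists>S. finite S \<and> I = {\<Sum>s\<in>S. c s * s | c. True})"

definition noetherian_ring :: "'a::comm_ring_1 itself \<Rightarrow> bool" where
  "noetherian_ring _ \<longleftrightarrow> (\<forall>I :: 'a set. ring_ideal I \<longrightarrow> finitely_generated_ideal I)"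

text \<open>An element of Z_p is represented by x with x n in {0..<p^n} its residue mod p^n.\<close>
definition Zp :: "nat \<Rightarrow> (nat \<Rightarrow> int) set" where
  "Zp p = {x. \<forall>n. 0 \<le> x n \<and> x n < int p ^ n \<and> x (Suc n) mod int p ^ n = x n}"

definition zp_zero :: "nat \<Rightarrow> nat \<Rightarrow> int" where
  "zp_zero p = (\<lambda>n. 0)"

definition zp_one :: "nat \<Rightarrow> nat \<Rightarrow> int" where
  "zp_one p = (\<lambda>n. 1 mod int p ^ n)"

definition zp_add :: "nat \<Rightarrow> (nat \<Rightarrow> int) \<Rightarrow> (nat \<Rightarrow> int) \<Rightarrow> nat \<Rightarrow> int" where
  "zp_add p x y = (\<lambda>n. (x n + y n) mod int p ^ n)"

definition zp_mul :: "nat \<Rightarrow> (nat \<Rightarrow> int) \<Rightarrow> (nat \<Rightarrow> int) \<Rightarrow> nat \<Rightarrow> int" where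
  "zp_mul p x y = (\<lambda>n. (x n * y n) mod int p ^ n)"

definition zp_neg :: "nat \<Rightarrow> (nat \<Rightarrow> int) \<Rightarrow> nat \<Rightarrow> int" where
  "zp_neg p x = (\<lambda>n. (- x n) mod int p ^ n)"

text \<open>ord_p x = largest n with p^n dividing x, i.e. least n with x mod p^(n+1) nonzero.\<close>
definition zp_ord :: "nat \<Rightarrow> (nat \<Rightarrow> int) \<Rightarrow> nat" where
  "zp_ord p x = (LEAST n. x (Suc n) \<noteq> 0)"

definition padic_norm :: "nat \<Rightarrow> (nat \<Rightarrow> int) \<Rightarrow> real" where
  "padic_norm p x = (if x = zp_zero p then 0 else real p powr (- real (zp_ord p x)))"

definition zp_ring_hom :: "nat \<Rightarrow> ((nat \<Rightarrow> int) \<Rightarrow> 'a::comm_ring_1) \<Rightarrow> bool" where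
  "zp_ring_hom p \<phi> \<longleftrightarrow>
     \<phi> (zp_one p) = 1 \<and>
     (\<forall>x\<in>Zp p. \<forall>y\<in>Zp p. \<phi> (zp_add p x y) = \<phi> x + \<phi> y) \<and>
     (\<forall>x\<in>Zp p. \<forall>y\<in>Zp p. \<phi> (zp_mul p x y) = \<phi> x * \<phi> y)"

definition zp_continuous :: "nat \<Rightarrow> ('a::comm_ring_1 \<Rightarrow> real) \<Rightarrow> ((nat \<Rightarrow> int) \<Rightarrow> 'a) \<Rightarrow> bool" where
  "zp_continuous p nrm \<phi> \<longleftrightarrow>
     (\<forall>x\<in>Zp p. \<forall>e>0. \<exists>d>0. \<forall>y\<in>Zp p.
        padic_norm p (zp_add p y (zp_neg p x)) < d \<longrightarrow> nrm (\<phi> y - \<phi> x) < e)"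

definition banach_tate_Zp_algebra ::
    "nat \<Rightarrow> ('a::comm_ring_1 \<Rightarrow> real) \<Rightarrow> ((nat \<Rightarrow> int) \<Rightarrow> 'a) \<Rightarrow> bool" where
  "banach_tate_Zp_algebra p nrm \<phi> \<longleftrightarrow>
     banach_tate_ring nrm \<and> zp_ring_hom p \<phi> \<and>
     (\<forall>x\<in>Zp p. nrm (\<phi> x) \<le> padic_norm p x)"

end

theory Submission
  imports Defs
begin



lemma Zp_D: "x \<in> Zp p \<Longrightarrow> 0 \<le> x n \<and> x n < int p ^ n \<and> x (Suc n) mod int p ^ n = x n"
  by (simp add: Zp_def)

lemma Zp_mod: assumes "x \<in> Zp p" "k \<le> m" shows "x m mod int p ^ k = x k"
  using assms(2)
proof (induction m)
  case 0
  then show ?case using Zp_D[OF assms(1), of 0] by simp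
next
  case (Suc m)
  show ?case
  proof (cases "k = Suc m")
    case True
    then show ?thesis using Zp_D[OF assms(1), of "Suc m"] by simp
  next
    case False
    then have "k \<le> m" using Suc by simp
    have "x (Suc m) mod int p ^ k = x (Suc m) mod int p ^ m mod int p ^ k"
      by (simp add: \<open>k \<le> m\<close> le_imp_power_dvd mod_mod_cancel)
    also have "\<dots> = x k" using Zp_D[OF assms(1), of m] Suc.IH[OF \<open>k \<le> m\<close>] by simp
    finally show ?thesis .
  qed
qed

lemma Zp_zero_below: assumes "x \<in> Zp p" "x n = 0" "k \<le> n" shows "x k = 0"
  using Zp_mod[OF assms(1) assms(3)] assms(2) by simp

lemma Zp_dvd: assumes "x \<in> Zp p" "x n = 0" "n \<le> m" shows "int p ^ n dvd x m"
  using Zp_mod[OF assms(1) assms(3)] assms(2) by (metis mod_0_imp_dvd)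

lemma zp_zero_in: "p \<ge> 2 \<Longrightarrow> zp_zero p \<in> Zp p"
  by (simp add: Zp_def zp_zero_def)

lemma zp_ord_prop: assumes "x \<in> Zp p" "x \<noteq> zp_zero p"
  shows "x (Suc (zp_ord p x)) \<noteq> 0" "x (zp_ord p x) = 0"
proof -
  obtain k where k: "x k \<noteq> 0" using assms(2) by (auto simp: zp_zero_def)
  have "k \<noteq> 0" using k Zp_D[OF assms(1), of 0] by (cases k) auto
  then obtain j where "k = Suc j" by (cases k) auto
  then have ex: "\<exists>n. x (Suc n) \<noteq> 0" using k by blast
  show "x (Suc (zp_ord p x)) \<noteq> 0" unfolding zp_ord_def by (rule LeastI_ex[OF ex])
  show "x (zp_ord p x) = 0"
  proof (cases "zp_ord p x")
    case 0
    then show ?thesis using Zp_D[OF assms(1), of 0] by simp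
  next
    case (Suc j)
    then have "j < zp_ord p x" by simp
    then have "\<not> x (Suc j) \<noteq> 0" unfolding zp_ord_def by (rule not_less_Least)
    then show ?thesis using Suc by simp
  qed
qed

lemma zp_ord_ge: assumes "x \<in> Zp p" "x \<noteq> zp_zero p" "x n = 0" shows "n \<le> zp_ord p x"
proof (rule ccontr)
  assume "\<not> n \<le> zp_ord p x"
  then have "Suc (zp_ord p x) \<le> n" by simp
  then have "x (Suc (zp_ord p x)) = 0" using Zp_zero_below[OF assms(1) assms(3)] by blast
  then show False using zp_ord_prop[OF assms(1,2)] by simp
qed

lemma zp_mul_in: assumes "x \<in> Zp p" "y \<in> Zp p" "p \<ge> 2" shows "zp_mul p x y \<in> Zp p"
  unfolding Zp_def zp_mul_def
proof (intro CollectI allI conjI)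
  fix n
  have pos: "int p ^ n > 0" using assms(3) by simp
  show "0 \<le> x n * y n mod int p ^ n" using pos by simp
  show "x n * y n mod int p ^ n < int p ^ n" using pos by simp
  have "x (Suc n) * y (Suc n) mod int p ^ Suc n mod int p ^ n = x (Suc n) * y (Suc n) mod int p ^ n"
    by (simp add: mod_mod_cancel)
  also have "\<dots> = (x (Suc n) mod int p ^ n) * (y (Suc n) mod int p ^ n) mod int p ^ n"
    by (simp add: mod_mult_eq)
  also have "\<dots> = x n * y n mod int p ^ n" using Zp_D[OF assms(1), of n] Zp_D[OF assms(2), of n] by simp
  finally show "x (Suc n) * y (Suc n) mod int p ^ Suc n mod int p ^ n = x n * y n mod int p ^ n" .
qed

lemma zp_mul_zero: assumes "x \<in> Zp p" "y \<in> Zp p" "x a = 0" "y b = 0"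
  shows "zp_mul p x y (a + b) = 0"
proof -
  have "int p ^ a dvd x (a+b)" using Zp_dvd[OF assms(1,3)] by simp
  moreover have "int p ^ b dvd y (a+b)" using Zp_dvd[OF assms(2,4)] by simp
  ultimately have "int p ^ a * int p ^ b dvd x (a+b) * y (a+b)" by (rule mult_dvd_mono)
  then show ?thesis by (simp add: zp_mul_def power_add)
qed

lemma zp_ord_mul: assumes "x \<in> Zp p" "y \<in> Zp p" "p \<ge> 2" "zp_mul p x y \<noteq> zp_zero p"
  shows "zp_ord p x + zp_ord p y \<le> zp_ord p (zp_mul p x y)"
proof -
  have x0: "x (zp_ord p x) = 0"
  proof (cases "x = zp_zero p")
    case True then show ?thesis by (simp add: zp_zero_def)
  next
    case False then show ?thesis using zp_ord_prop[OF assms(1)] by simp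
  qed
  have y0: "y (zp_ord p y) = 0"
  proof (cases "y = zp_zero p")
    case True then show ?thesis by (simp add: zp_zero_def)
  next
    case False then show ?thesis using zp_ord_prop[OF assms(2)] by simp
  qed
  show ?thesis
    by (rule zp_ord_ge[OF zp_mul_in[OF assms(1,2,3)] assms(4) zp_mul_zero[OF assms(1,2) x0 y0]])
qed

definition pw :: "nat \<Rightarrow> nat \<Rightarrow> nat \<Rightarrow> int" where
  "pw p n = (\<lambda>k. int p ^ n mod int p ^ k)"

lemma pw_in: assumes "p \<ge> 2" shows "pw p n \<in> Zp p"
  unfolding Zp_def pw_def
proof (intro CollectI allI conjI)
  fix k
  have pos: "int p ^ k > 0" using assms by simp
  show "0 \<le> int p ^ n mod int p ^ k" using pos by simp
  show "int p ^ n mod int p ^ k < int p ^ k" using pos by simp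
  have "int p ^ k dvd int p ^ Suc k" by simp
  then show "int p ^ n mod int p ^ Suc k mod int p ^ k = int p ^ n mod int p ^ k" by (rule mod_mod_cancel)
qed

lemma pw_zero: "pw p 0 = zp_one p"
  by (simp add: pw_def zp_one_def)

lemma pw_add: "zp_mul p (pw p n) (pw p m) = pw p (n + m)"
  by (rule ext) (simp add: pw_def zp_mul_def mod_mult_eq power_add)

lemma pw_vanish: "pw p n n = 0"
  by (simp add: pw_def)

lemma factor: assumes "x \<in> Zp p" "x n = 0" "p \<ge> 2"
  shows "\<exists>u\<in>Zp p. x = zp_mul p (pw p n) u"
proof -
  define P where "P = int p"
  have P: "P \<ge> 2" using assms(3) by (simp add: P_def)
  define u where "u = (\<lambda>k. x (k + n) div P ^ n)"
  have dv: "\<And>k. P ^ n dvd x (k + n)" using Zp_dvd[OF assms(1,2)] by (simp add: P_def)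
  have eq: "\<And>k. P ^ n * u k = x (k + n)" using dv by (simp add: u_def)
  have "u \<in> Zp p"
    unfolding Zp_def
  proof (intro CollectI allI conjI)
    fix k
    have r: "0 \<le> x (k+n)" "x (k+n) < P ^ (k+n)" using Zp_D[OF assms(1), of "k+n"] by (auto simp: P_def)
    show "0 \<le> u k" using r P by (simp add: u_def pos_imp_zdiv_nonneg_iff)
    have "P ^ n * u k < P ^ n * P ^ k" using eq[of k] r by (simp add: power_add mult.commute)
    moreover have "P ^ n > 0" using P by simp
    ultimately have "u k < P ^ k" by simp
    then show "u k < int p ^ k" unfolding P_def .
    have "P ^ n * (u (Suc k) mod P ^ k) = (P ^ n * u (Suc k)) mod (P ^ n * P ^ k)"
      by (rule mult_mod_right)
    also have "\<dots> = x (Suc k + n) mod P ^ (k + n)" by (metis eq power_add mult.commute)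
    also have "\<dots> = x (k + n)" using Zp_mod[OF assms(1), of "k+n" "Suc k + n"] by (simp add: P_def)
    also have "\<dots> = P ^ n * u k" using eq[of k] by simp
    finally have "P ^ n * (u (Suc k) mod P ^ k) = P ^ n * u k" .
    moreover have "P ^ n \<noteq> 0" using P by simp
    ultimately have "u (Suc k) mod P ^ k = u k" by (metis mult_left_cancel)
    then show "u (Suc k) mod int p ^ k = u k" unfolding P_def .
  qed
  moreover have "x = zp_mul p (pw p n) u"
  proof
    fix k
    have "zp_mul p (pw p n) u k = (P ^ n mod P ^ k) * u k mod P ^ k"
      by (simp add: zp_mul_def pw_def P_def)
    also have "\<dots> = P ^ n * u k mod P ^ k" by (simp add: mod_mult_left_eq)
    also have "\<dots> = x (k + n) mod P ^ k" using eq by simp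
    also have "\<dots> = x k" using Zp_mod[OF assms(1), of k "k+n"] by (simp add: P_def)
    finally show "x k = zp_mul p (pw p n) u k" by simp
  qed
  ultimately show ?thesis by blast
qed




lemma rn_nonneg: "is_ring_norm nrm \<Longrightarrow> 0 \<le> nrm r" unfolding is_ring_norm_def by blast
lemma rn_zero_iff: "is_ring_norm nrm \<Longrightarrow> nrm r = 0 \<longleftrightarrow> r = 0" unfolding is_ring_norm_def by blast
lemma rn_neg: "is_ring_norm nrm \<Longrightarrow> nrm (- r) = nrm r" unfolding is_ring_norm_def by blast
lemma rn_add: "is_ring_norm nrm \<Longrightarrow> nrm (r + s) \<le> max (nrm r) (nrm s)" unfolding is_ring_norm_def by blast
lemma rn_mult: "is_ring_norm nrm \<Longrightarrow> nrm (r * s) \<le> nrm r * nrm s" unfolding is_ring_norm_def by blast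
lemma rn_one: "is_ring_norm nrm \<Longrightarrow> nrm 1 = 1" unfolding is_ring_norm_def by blast
lemma rn_zero: "is_ring_norm nrm \<Longrightarrow> nrm 0 = 0" unfolding is_ring_norm_def by blast

lemma zp_one_in: "p \<ge> 2 \<Longrightarrow> zp_one p \<in> Zp p"
  using pw_in[of p 0] by (simp add: pw_zero)

lemma zp_ord_one: "p \<ge> 2 \<Longrightarrow> zp_ord p (zp_one p) = 0"
  unfolding zp_ord_def zp_one_def by (rule Least_equality) auto

lemma zp_one_nz: "p \<ge> 2 \<Longrightarrow> zp_one p \<noteq> zp_zero p"
proof
  assume p: "p \<ge> 2" and eq: "zp_one p = zp_zero p"
  have "zp_one p 1 = zp_zero p 1" using eq by simp
  moreover have "(1::int) mod int p = 1" using p by (intro mod_pos_pos_trivial) auto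
  ultimately show False by (simp add: zp_one_def zp_zero_def)
qed

definition emb :: "nat \<Rightarrow> int \<Rightarrow> nat \<Rightarrow> int" where
  "emb p z = (\<lambda>k. z mod int p ^ k)"

lemma emb_in: assumes "p \<ge> 2" shows "emb p z \<in> Zp p"
  unfolding Zp_def emb_def
proof (intro CollectI allI conjI)
  fix k
  have pos: "int p ^ k > 0" using assms by simp
  show "0 \<le> z mod int p ^ k" using pos by simp
  show "z mod int p ^ k < int p ^ k" using pos by simp
  have "int p ^ k dvd int p ^ Suc k" by simp
  then show "z mod int p ^ Suc k mod int p ^ k = z mod int p ^ k" by (rule mod_mod_cancel)
qed

lemma emb_add: "zp_add p (emb p a) (emb p b) = emb p (a + b)"
  by (rule ext) (simp add: zp_add_def emb_def mod_add_eq)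

lemma emb_one: "emb p 1 = zp_one p"
  by (simp add: emb_def zp_one_def)

lemma zp_add_zero: "zp_add p (zp_zero p) (zp_zero p) = zp_zero p"
  by (rule ext) (simp add: zp_add_def zp_zero_def)

lemma emb_zero: "emb p 0 = zp_zero p"
  by (rule ext) (simp add: emb_def zp_zero_def)

lemma phi_zero: assumes "p \<ge> 2" "zp_ring_hom p \<phi>" shows "\<phi> (zp_zero p) = 0"
proof -
  have "\<phi> (zp_add p (zp_zero p) (zp_zero p)) = \<phi> (zp_zero p) + \<phi> (zp_zero p)"
    using assms zp_zero_in[OF assms(1)] by (simp add: zp_ring_hom_def)
  then show ?thesis by (simp add: zp_add_zero)
qed

lemma phi_emb: assumes "p \<ge> 2" "zp_ring_hom p \<phi>" shows "\<phi> (emb p (int n)) = of_nat n"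
proof (induction n)
  case 0 then show ?case using phi_zero[OF assms] by (simp add: emb_zero)
next
  case (Suc n)
  have "emb p (int (Suc n)) = zp_add p (emb p (int n)) (emb p 1)" by (metis emb_add of_nat_Suc add.commute)
  then have "\<phi> (emb p (int (Suc n))) = \<phi> (emb p (int n)) + \<phi> (emb p 1)"
    using assms emb_in[OF assms(1)] by (simp add: zp_ring_hom_def)
  then show ?case using Suc assms(2) by (simp add: emb_one zp_ring_hom_def)
qed

lemma phi_pw: assumes "p \<ge> 2" "zp_ring_hom p \<phi>" shows "\<phi> (pw p n) = \<phi> (pw p 1) ^ n"
proof (induction n)
  case 0 then show ?case using assms(2) by (simp add: pw_zero zp_ring_hom_def)
next
  case (Suc n)
  have "pw p (Suc n) = zp_mul p (pw p 1) (pw p n)" using pw_add[of p 1 n] by simp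
  then have "\<phi> (pw p (Suc n)) = \<phi> (pw p 1) * \<phi> (pw p n)"
    using assms pw_in[OF assms(1)] by (simp add: zp_ring_hom_def)
  then show ?case using Suc by simp
qed

lemma norm_of_nat: assumes "is_ring_norm nrm" shows "nrm (of_nat n) \<le> 1"
proof (induction n)
  case 0
  have "nrm 0 = 0" using assms unfolding is_ring_norm_def by blast
  then show ?case by simp
next
  case (Suc n)
  have "nrm (of_nat (Suc n)) = nrm (of_nat n + 1)" by (simp add: add.commute)
  also have "\<dots> \<le> max (nrm (of_nat n)) (nrm 1)" using assms by (rule rn_add)
  finally show ?case using Suc rn_one[OF assms] by simp
qed

lemma norm_pow: assumes "is_ring_norm nrm" shows "nrm (z ^ n) \<le> nrm z ^ n"
proof (induction n)
  case 0 then show ?case using assms by (simp add: is_ring_norm_def)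
next
  case (Suc n)
  have "nrm (z ^ Suc n) \<le> nrm z * nrm (z ^ n)" using assms by (simp add: is_ring_norm_def)
  also have "\<dots> \<le> nrm z * nrm z ^ n"
    using Suc assms by (intro mult_left_mono) (auto simp: is_ring_norm_def)
  finally show ?case by simp
qed

lemma zp_add_neg_zero: assumes "y \<in> Zp p" shows "zp_add p y (zp_neg p (zp_zero p)) = y"
proof
  fix k
  show "zp_add p y (zp_neg p (zp_zero p)) k = y k"
    using Zp_D[OF assms, of k] by (simp add: zp_add_def zp_neg_def zp_zero_def)
qed

lemma padic_bound: assumes "p \<ge> 2" "y \<in> Zp p" "y m = 0"
  shows "padic_norm p y \<le> (1 / real p) ^ m"
proof (cases "y = zp_zero p")
  case True then show ?thesis by (simp add: padic_norm_def)
next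
  case False
  then have le: "m \<le> zp_ord p y" using zp_ord_ge[OF assms(2) _ assms(3)] by simp
  have "padic_norm p y = real p powr (- real (zp_ord p y))" using False by (simp add: padic_norm_def)
  also have "\<dots> = (1 / real p) ^ zp_ord p y" using assms(1)
    by (simp add: powr_minus powr_realpow power_one_over inverse_eq_divide)
  also have "\<dots> \<le> (1 / real p) ^ m" using assms(1) le by (intro power_decreasing) auto
  finally show ?thesis .
qed

lemma decomp: assumes "p \<ge> 2" "u \<in> Zp p"
  shows "(\<lambda>k. (u k - u m) mod int p ^ k) \<in> Zp p"
    and "(\<lambda>k. (u k - u m) mod int p ^ k) m = 0"
    and "zp_add p (emb p (u m)) (\<lambda>k. (u k - u m) mod int p ^ k) = u"
proof -
  show "(\<lambda>k. (u k - u m) mod int p ^ k) \<in> Zp p"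
    unfolding Zp_def
  proof (intro CollectI allI conjI)
    fix k
    have pos: "int p ^ k > 0" using assms by simp
    show "0 \<le> (u k - u m) mod int p ^ k" using pos by simp
    show "(u k - u m) mod int p ^ k < int p ^ k" using pos by simp
    have d: "int p ^ k dvd int p ^ Suc k" by simp
    have "(u (Suc k) - u m) mod int p ^ Suc k mod int p ^ k = (u (Suc k) - u m) mod int p ^ k"
      using d by (rule mod_mod_cancel)
    also have "\<dots> = (u (Suc k) mod int p ^ k - u m) mod int p ^ k" by (simp add: mod_diff_left_eq)
    also have "\<dots> = (u k - u m) mod int p ^ k" using Zp_D[OF assms(2), of k] by simp
    finally show "(u (Suc k) - u m) mod int p ^ Suc k mod int p ^ k = (u k - u m) mod int p ^ k" .
  qed
  show "(\<lambda>k. (u k - u m) mod int p ^ k) m = 0" by simp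
  show "zp_add p (emb p (u m)) (\<lambda>k. (u k - u m) mod int p ^ k) = u"
  proof
    fix k
    have "zp_add p (emb p (u m)) (\<lambda>k. (u k - u m) mod int p ^ k) k
        = (u m mod int p ^ k + (u k - u m) mod int p ^ k) mod int p ^ k"
      by (simp add: zp_add_def emb_def)
    also have "\<dots> = (u m + (u k - u m)) mod int p ^ k" by (simp add: mod_add_eq)
    also have "\<dots> = u k" using Zp_D[OF assms(2), of k] by simp
    finally show "zp_add p (emb p (u m)) (\<lambda>k. (u k - u m) mod int p ^ k) k = u k" .
  qed
qed




locale L1 =
  fixes nrm :: "'a::comm_ring_1 \<Rightarrow> real" and \<phi> :: "(nat \<Rightarrow> int) \<Rightarrow> 'a" and p :: nat
  assumes p2: "p \<ge> 2" and rn: "is_ring_norm nrm" and hom: "zp_ring_hom p \<phi>"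
    and cont: "zp_continuous p nrm \<phi>"
begin

lemma hom_add: "x \<in> Zp p \<Longrightarrow> y \<in> Zp p \<Longrightarrow> \<phi> (zp_add p x y) = \<phi> x + \<phi> y"
  using hom by (simp add: zp_ring_hom_def)
lemma hom_mul: "x \<in> Zp p \<Longrightarrow> y \<in> Zp p \<Longrightarrow> \<phi> (zp_mul p x y) = \<phi> x * \<phi> y"
  using hom by (simp add: zp_ring_hom_def)
lemma hom_one: "\<phi> (zp_one p) = 1"
  using hom by (simp add: zp_ring_hom_def)

lemma cont0: "\<exists>d>0. \<forall>y\<in>Zp p. padic_norm p y < d \<longrightarrow> nrm (\<phi> y) < 1"
proof -
  obtain d where d: "d > 0" "\<forall>y\<in>Zp p. padic_norm p (zp_add p y (zp_neg p (zp_zero p))) < d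
      \<longrightarrow> nrm (\<phi> y - \<phi> (zp_zero p)) < 1"
    using cont zp_zero_in[OF p2] unfolding zp_continuous_def
    by (metis zero_less_one)
  have "\<forall>y\<in>Zp p. padic_norm p y < d \<longrightarrow> nrm (\<phi> y) < 1"
    using d(2) zp_add_neg_zero phi_zero[OF p2 hom] by simp
  then show ?thesis using d(1) by blast
qed

lemma exM: "\<exists>M>0. \<forall>y\<in>Zp p. y M = 0 \<longrightarrow> nrm (\<phi> y) < 1"
proof -
  obtain d where d: "d > 0" "\<forall>y\<in>Zp p. padic_norm p y < d \<longrightarrow> nrm (\<phi> y) < 1"
    using cont0 by blast
  have lt: "1 / real p < 1" using p2 by simp
  obtain m where m: "(1 / real p) ^ m < d" using real_arch_pow_inv[OF d(1) lt] by blast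
  have "(1 / real p) ^ Suc m \<le> (1 / real p) ^ m" using p2 by (intro power_decreasing) auto
  then have m': "(1 / real p) ^ Suc m < d" using m by linarith
  have "\<forall>y\<in>Zp p. y (Suc m) = 0 \<longrightarrow> nrm (\<phi> y) < 1"
  proof (intro ballI impI)
    fix y assume y: "y \<in> Zp p" "y (Suc m) = 0"
    have "padic_norm p y < d" using padic_bound[OF p2 y] m' by linarith
    then show "nrm (\<phi> y) < 1" using d(2) y(1) by blast
  qed
  then show ?thesis by blast
qed

lemma bound1: assumes u: "u \<in> Zp p" shows "nrm (\<phi> u) \<le> 1"
proof -
  obtain M where M: "M > 0" "\<forall>y\<in>Zp p. y M = 0 \<longrightarrow> nrm (\<phi> y) < 1" using exM by blast
  define y where "y = (\<lambda>k. (u k - u M) mod int p ^ k)"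
  have y: "y \<in> Zp p" "y M = 0" "zp_add p (emb p (u M)) y = u"
    using decomp[OF p2 u, of M] unfolding y_def by auto
  have e1: "\<phi> (zp_add p (emb p (u M)) y) = \<phi> (emb p (u M)) + \<phi> y"
    by (rule hom_add[OF emb_in[OF p2] y(1)])
  have e2: "\<phi> u = \<phi> (emb p (u M)) + \<phi> y" using e1 unfolding y(3) .
  have "u M = int (nat (u M))" using Zp_D[OF u, of M] by simp
  then have e3: "\<phi> (emb p (u M)) = of_nat (nat (u M))" using phi_emb[OF p2 hom, of "nat (u M)"] by simp
  have "nrm (\<phi> u) \<le> max (nrm (of_nat (nat (u M)))) (nrm (\<phi> y))"
    unfolding e2 e3 by (rule rn_add[OF rn])
  moreover have "nrm (of_nat (nat (u M))) \<le> 1" by (rule norm_of_nat[OF rn])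
  moreover have "nrm (\<phi> y) < 1" by (rule M(2)[rule_format, OF y(1) y(2)])
  ultimately show ?thesis by linarith
qed

lemma exck: "\<exists>c K. 0 < c \<and> c < 1 \<and> K \<ge> 1 \<and> (\<forall>x\<in>Zp p. nrm (\<phi> x) \<le> K * c ^ zp_ord p x)"
proof -
  obtain M where M: "M > 0" "\<forall>y\<in>Zp p. y M = 0 \<longrightarrow> nrm (\<phi> y) < 1" using exM by blast
  define t where "t = \<phi> (pw p 1)"
  define a where "a = nrm (\<phi> (pw p M))"
  have a1: "a < 1" unfolding a_def by (rule M(2)[rule_format, OF pw_in[OF p2] pw_vanish])
  have a0: "0 \<le> a" unfolding a_def using rn_nonneg[OF rn] .
  have tM: "t ^ M = \<phi> (pw p M)" unfolding t_def by (rule phi_pw[OF p2 hom, symmetric])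
  have t1: "nrm t \<le> 1" unfolding t_def by (rule bound1[OF pw_in[OF p2]])
  define b where "b = max a (1/2)"
  define c where "c = root M b"
  have b: "0 < b" "b < 1" "a \<le> b" using a1 unfolding b_def by auto
  have cM: "c ^ M = b" unfolding c_def using M(1) b by simp
  have c0: "0 < c" unfolding c_def using M(1) b by (simp add: real_root_gt_zero)
  have c1: "c < 1" unfolding c_def using M(1) b by simp
  define K where "K = (1 / c) ^ M"
  have K1: "K \<ge> 1" unfolding K_def using c0 c1 by (simp add: one_le_power)
  have "\<forall>x\<in>Zp p. nrm (\<phi> x) \<le> K * c ^ zp_ord p x"
  proof
    fix x assume x: "x \<in> Zp p"
    have Kc: "0 \<le> K * c ^ zp_ord p x" using K1 c0 by simp
    show "nrm (\<phi> x) \<le> K * c ^ zp_ord p x"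
    proof (cases "x = zp_zero p")
      case True
      then show ?thesis using phi_zero[OF p2 hom] rn_zero[OF rn] Kc by simp
    next
      case False
      define n where "n = zp_ord p x"
      have xn: "x n = 0" unfolding n_def using zp_ord_prop[OF x False] by simp
      obtain u where u: "u \<in> Zp p" "x = zp_mul p (pw p n) u" using factor[OF x xn p2] by blast
      have pn: "\<phi> (pw p n) = t ^ n" unfolding t_def by (rule phi_pw[OF p2 hom])
      have "\<phi> x = \<phi> (pw p n) * \<phi> u" unfolding u(2) by (rule hom_mul[OF pw_in[OF p2] u(1)])
      then have "\<phi> x = t ^ n * \<phi> u" unfolding pn .
      then have "nrm (\<phi> x) \<le> nrm (t ^ n) * nrm (\<phi> u)" using rn_mult[OF rn] by simp
      also have "\<dots> \<le> nrm (t ^ n) * 1"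
        using bound1[OF u(1)] rn_nonneg[OF rn] by (intro mult_left_mono) auto
      finally have s1: "nrm (\<phi> x) \<le> nrm (t ^ n)" by simp
      define q where "q = n div M"
      define r where "r = n mod M"
      have nqr: "n = M * q + r" unfolding q_def r_def by simp
      have rM: "r \<le> M" unfolding r_def using M(1) by (simp add: less_imp_le)
      have "t ^ n = (t ^ M) ^ q * t ^ r" using nqr by (simp add: power_add power_mult)
      then have "nrm (t ^ n) \<le> nrm ((t ^ M) ^ q) * nrm (t ^ r)" using rn_mult[OF rn] by simp
      also have "\<dots> \<le> a ^ q * 1"
      proof (rule mult_mono)
        show "nrm ((t ^ M) ^ q) \<le> a ^ q" using norm_pow[OF rn, of "t ^ M" q] tM a_def by simp
        have "nrm (t ^ r) \<le> nrm t ^ r" by (rule norm_pow[OF rn])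
        also have "\<dots> \<le> 1" using t1 rn_nonneg[OF rn] by (simp add: power_le_one)
        finally show "nrm (t ^ r) \<le> 1" .
        show "0 \<le> a ^ q" using a0 by simp
        show "0 \<le> nrm (t ^ r)" using rn_nonneg[OF rn] .
      qed
      also have "\<dots> \<le> b ^ q" using a0 b(3) by (simp add: power_mono)
      also have "\<dots> = c ^ (M * q)" using cM by (simp add: power_mult)
      also have "\<dots> \<le> K * c ^ n"
      proof -
        have "c ^ M \<le> c ^ r" using c0 c1 rM by (intro power_decreasing) auto
        then have "1 \<le> (1 / c) ^ M * c ^ r" using c0
          by (simp add: power_one_over divide_simps)
        then have "c ^ (M * q) * 1 \<le> c ^ (M * q) * ((1 / c) ^ M * c ^ r)"
          using c0 by (intro mult_left_mono) auto
        then show ?thesis unfolding K_def using nqr by (simp add: power_add mult_ac)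
      qed
      finally show ?thesis using s1 unfolding n_def by linarith
    qed
  qed
  then show ?thesis using c0 c1 K1 by blast
qed

end



definition N0 :: "('a::comm_ring_1 \<Rightarrow> real) \<Rightarrow> ((nat \<Rightarrow> int) \<Rightarrow> 'a) \<Rightarrow> nat \<Rightarrow> real \<Rightarrow> 'a \<Rightarrow> real" where
  "N0 nrm \<phi> p c y = (SUP x\<in>Zp p. nrm (\<phi> x * y) * (1 / c) ^ zp_ord p x)"

definition NN :: "('a::comm_ring_1 \<Rightarrow> real) \<Rightarrow> ((nat \<Rightarrow> int) \<Rightarrow> 'a) \<Rightarrow> nat \<Rightarrow> real \<Rightarrow> 'a \<Rightarrow> real" where
  "NN nrm \<phi> p c r = (SUP y\<in>-{0}. N0 nrm \<phi> p c (r * y) / N0 nrm \<phi> p c y)"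

locale L2 =
  fixes nrm :: "'a::comm_ring_1 \<Rightarrow> real" and \<phi> :: "(nat \<Rightarrow> int) \<Rightarrow> 'a" and p :: nat
    and w :: 'a and c K :: real
  assumes p2: "p \<ge> 2" and rn: "is_ring_norm nrm" and hom: "zp_ring_hom p \<phi>"
    and mpu: "mult_pseudo_uniformizer nrm w"
    and c0: "0 < c" and c1: "c < 1" and K1: "K \<ge> 1"
    and bnd: "\<forall>x\<in>Zp p. nrm (\<phi> x) \<le> K * c ^ zp_ord p x"
begin

abbreviation "n0 \<equiv> N0 nrm \<phi> p c"
abbreviation "nn \<equiv> NN nrm \<phi> p c"

lemma hom_mul: "x \<in> Zp p \<Longrightarrow> y \<in> Zp p \<Longrightarrow> \<phi> (zp_mul p x y) = \<phi> x * \<phi> y"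
  using hom by (simp add: zp_ring_hom_def)
lemma hom_one: "\<phi> (zp_one p) = 1"
  using hom by (simp add: zp_ring_hom_def)

lemma term_bound: assumes x: "x \<in> Zp p"
  shows "nrm (\<phi> x * y) * (1 / c) ^ zp_ord p x \<le> K * nrm y"
proof -
  have "nrm (\<phi> x * y) \<le> nrm (\<phi> x) * nrm y" by (rule rn_mult[OF rn])
  also have "\<dots> \<le> K * c ^ zp_ord p x * nrm y"
    using bnd x rn_nonneg[OF rn] by (intro mult_right_mono) auto
  finally have "nrm (\<phi> x * y) * (1 / c) ^ zp_ord p x \<le> K * c ^ zp_ord p x * nrm y * (1 / c) ^ zp_ord p x"
    using c0 by (intro mult_right_mono) auto
  also have "\<dots> = K * nrm y * (c ^ zp_ord p x * (1 / c) ^ zp_ord p x)" by (simp add: mult_ac)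
  also have "\<dots> = K * nrm y" using c0 by (simp add: power_one_over)
  finally show ?thesis .
qed

lemma Zp_ne: "Zp p \<noteq> {}" using zp_zero_in[OF p2] by blast

lemma n0_bdd: "bdd_above ((\<lambda>x. nrm (\<phi> x * y) * (1 / c) ^ zp_ord p x) ` Zp p)"
  using term_bound by (intro bdd_aboveI2) blast

lemma n0_upper: "x \<in> Zp p \<Longrightarrow> nrm (\<phi> x * y) * (1 / c) ^ zp_ord p x \<le> n0 y"
  unfolding N0_def by (rule cSUP_upper[OF _ n0_bdd])

lemma n0_least: "(\<And>x. x \<in> Zp p \<Longrightarrow> nrm (\<phi> x * y) * (1 / c) ^ zp_ord p x \<le> B) \<Longrightarrow> n0 y \<le> B"
  unfolding N0_def by (rule cSUP_least[OF Zp_ne])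

lemma n0_le: "n0 y \<le> K * nrm y"
  by (rule n0_least[OF term_bound])

lemma n0_ge: "nrm y \<le> n0 y"
  using n0_upper[OF zp_one_in[OF p2], of y] by (simp add: hom_one zp_ord_one[OF p2])

lemma n0_nonneg: "0 \<le> n0 y"
  using n0_ge[of y] rn_nonneg[OF rn, of y] by linarith

lemma n0_zero: "n0 0 = 0"
  using n0_le[of 0] n0_nonneg[of 0] rn_zero[OF rn] by simp

lemma n0_pos: "y \<noteq> 0 \<Longrightarrow> 0 < n0 y"
  using n0_ge[of y] rn_nonneg[OF rn, of y] rn_zero_iff[OF rn, of y] by linarith

lemma n0_add: "n0 (y + z) \<le> max (n0 y) (n0 z)"
proof (rule n0_least)
  fix x assume x: "x \<in> Zp p"
  have pc: "0 \<le> (1 / c) ^ zp_ord p x" using c0 by simp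
  have "nrm (\<phi> x * (y + z)) \<le> max (nrm (\<phi> x * y)) (nrm (\<phi> x * z))"
    using rn_add[OF rn, of "\<phi> x * y" "\<phi> x * z"] by (simp add: distrib_left)
  then have "nrm (\<phi> x * (y + z)) * (1 / c) ^ zp_ord p x
      \<le> max (nrm (\<phi> x * y)) (nrm (\<phi> x * z)) * (1 / c) ^ zp_ord p x"
    using pc by (rule mult_right_mono)
  also have "\<dots> = max (nrm (\<phi> x * y) * (1 / c) ^ zp_ord p x) (nrm (\<phi> x * z) * (1 / c) ^ zp_ord p x)"
    using pc by (simp add: max_mult_distrib_right)
  also have "\<dots> \<le> max (n0 y) (n0 z)" using n0_upper[OF x] by (intro max.mono)
  finally show "nrm (\<phi> x * (y + z)) * (1 / c) ^ zp_ord p x \<le> max (n0 y) (n0 z)" .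
qed

lemma n0_neg: "n0 (- y) = n0 y"
  unfolding N0_def using rn_neg[OF rn] by simp

lemma n0_mult: "n0 (r * y) \<le> nrm r * n0 y"
proof (rule n0_least)
  fix x assume x: "x \<in> Zp p"
  have pc: "0 \<le> (1 / c) ^ zp_ord p x" using c0 by simp
  have "nrm (\<phi> x * (r * y)) \<le> nrm r * nrm (\<phi> x * y)"
    using rn_mult[OF rn, of r "\<phi> x * y"] by (simp add: mult_ac)
  then have "nrm (\<phi> x * (r * y)) * (1 / c) ^ zp_ord p x \<le> nrm r * nrm (\<phi> x * y) * (1 / c) ^ zp_ord p x"
    using pc by (rule mult_right_mono)
  also have "\<dots> \<le> nrm r * n0 y"
    using n0_upper[OF x, of y] rn_nonneg[OF rn, of r] by (simp add: mult.assoc mult_left_mono)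
  finally show "nrm (\<phi> x * (r * y)) * (1 / c) ^ zp_ord p x \<le> nrm r * n0 y" .
qed

lemma w_mult: "nrm (w * s) = nrm w * nrm s"
  using mpu by (simp add: mult_pseudo_uniformizer_def)

lemma w_pos: "0 < nrm w"
proof -
  have "w dvd 1" using mpu by (simp add: mult_pseudo_uniformizer_def)
  then have "w \<noteq> 0" using rn_zero[OF rn] rn_one[OF rn] by auto
  then show ?thesis using rn_nonneg[OF rn, of w] rn_zero_iff[OF rn, of w] by linarith
qed

lemma n0_w: "n0 (w * y) = nrm w * n0 y"
proof (rule antisym)
  show "n0 (w * y) \<le> nrm w * n0 y" by (rule n0_mult)
  have "n0 y \<le> n0 (w * y) / nrm w"
  proof (rule n0_least)
    fix x assume x: "x \<in> Zp p"
    have "nrm (\<phi> x * (w * y)) = nrm w * nrm (\<phi> x * y)" using w_mult[of "\<phi> x * y"] by (simp add: mult_ac)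
    then have "nrm w * (nrm (\<phi> x * y) * (1 / c) ^ zp_ord p x) \<le> n0 (w * y)"
      using n0_upper[OF x, of "w * y"] by (simp add: mult_ac)
    then show "nrm (\<phi> x * y) * (1 / c) ^ zp_ord p x \<le> n0 (w * y) / nrm w"
      using w_pos by (simp add: field_simps)
  qed
  then show "nrm w * n0 y \<le> n0 (w * y)" using w_pos by (simp add: field_simps)
qed

lemma n0_phi: assumes x: "x \<in> Zp p" shows "n0 (\<phi> x * z) \<le> c ^ zp_ord p x * n0 z"
proof (rule n0_least)
  fix x' assume x': "x' \<in> Zp p"
  define x'' where "x'' = zp_mul p x' x"
  have x'': "x'' \<in> Zp p" unfolding x''_def by (rule zp_mul_in[OF x' x p2])
  have ph: "\<phi> x' * (\<phi> x * z) = \<phi> x'' * z" unfolding x''_def using hom_mul[OF x' x] by (simp add: mult_ac)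
  have rhs0: "0 \<le> c ^ zp_ord p x * n0 z" using c0 n0_nonneg by simp
  show "nrm (\<phi> x' * (\<phi> x * z)) * (1 / c) ^ zp_ord p x' \<le> c ^ zp_ord p x * n0 z"
  proof (cases "x'' = zp_zero p")
    case True
    then show ?thesis unfolding ph using phi_zero[OF p2 hom] rn_zero[OF rn] rhs0 by simp
  next
    case False
    have ord: "zp_ord p x' + zp_ord p x \<le> zp_ord p x''"
      unfolding x''_def by (rule zp_ord_mul[OF x' x p2 False[unfolded x''_def]])
    have ic: "1 \<le> 1 / c" using c0 c1 by simp
    have "(1 / c) ^ zp_ord p x' * (1 / c) ^ zp_ord p x \<le> (1 / c) ^ zp_ord p x''"
      using power_increasing[OF ord ic] by (simp add: power_add)
    then have "(1 / c) ^ zp_ord p x' \<le> c ^ zp_ord p x * (1 / c) ^ zp_ord p x''"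
      using c0 by (simp add: power_one_over field_simps)
    then have "nrm (\<phi> x'' * z) * (1 / c) ^ zp_ord p x' \<le> nrm (\<phi> x'' * z) * (c ^ zp_ord p x * (1 / c) ^ zp_ord p x'')"
      using rn_nonneg[OF rn] by (rule mult_left_mono)
    also have "\<dots> = c ^ zp_ord p x * (nrm (\<phi> x'' * z) * (1 / c) ^ zp_ord p x'')" by (simp add: mult_ac)
    also have "\<dots> \<le> c ^ zp_ord p x * n0 z"
      using n0_upper[OF x''] c0 by (intro mult_left_mono) auto
    finally show ?thesis unfolding ph .
  qed
qed

end



context L2 begin

lemma one_nz: "(1::'a) \<noteq> 0" using rn_zero[OF rn] rn_one[OF rn] by auto

lemma ne: "- {0::'a} \<noteq> {}"
proof -
  have "(1::'a) \<in> - {0}" using one_nz by simp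
  then show ?thesis by blast
qed

lemma nn_term: "y \<noteq> 0 \<Longrightarrow> n0 (r * y) / n0 y \<le> nrm r"
  using n0_mult[of r y] n0_pos[of y] by (simp add: divide_le_eq)

lemma nn_bdd: "bdd_above ((\<lambda>y. n0 (r * y) / n0 y) ` (- {0}))"
  using nn_term by (intro bdd_aboveI2) auto

lemma nn_upper: "y \<noteq> 0 \<Longrightarrow> n0 (r * y) / n0 y \<le> nn r"
  unfolding NN_def by (rule cSUP_upper[OF _ nn_bdd]) simp

lemma nn_least: "(\<And>y. y \<noteq> 0 \<Longrightarrow> n0 (r * y) / n0 y \<le> B) \<Longrightarrow> nn r \<le> B"
  unfolding NN_def by (rule cSUP_least[OF ne]) auto

lemma nn_key: "n0 (r * y) \<le> nn r * n0 y"
proof (cases "y = 0")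
  case True then show ?thesis using n0_zero by simp
next
  case False
  then show ?thesis using nn_upper[OF False, of r] n0_pos[OF False] by (simp add: divide_le_eq)
qed

lemma nn_nonneg: "0 \<le> nn r"
proof -
  have "0 \<le> n0 (r * 1) / n0 1" using n0_nonneg[of "r * 1"] n0_nonneg[of 1] by simp
  then show ?thesis using nn_upper[OF one_nz, of r] by linarith
qed

lemma nn_le: "nn r \<le> nrm r"
  by (rule nn_least[OF nn_term])

lemma nn_ge: "nrm r / K \<le> nn r"
proof -
  have "n0 r / n0 1 \<le> nn r" using nn_upper[OF one_nz, of r] by simp
  moreover have "nrm r / K \<le> n0 r / n0 1"
  proof -
    have a: "n0 1 \<le> K" using n0_le[of 1] rn_one[OF rn] by simp
    have b: "0 < n0 1" using n0_pos[OF one_nz] .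
    have "nrm r / K \<le> n0 r / K" using n0_ge[of r] K1 by (simp add: divide_right_mono)
    also have "\<dots> \<le> n0 r / n0 1" using a b n0_nonneg[of r] by (intro divide_left_mono) auto
    finally show ?thesis .
  qed
  ultimately show ?thesis by linarith
qed

lemma nn_one: "nn 1 = 1"
proof (rule antisym)
  show "nn 1 \<le> 1" by (rule nn_least) (simp add: n0_pos)
  show "1 \<le> nn 1" using nn_upper[OF one_nz, of 1] n0_pos[OF one_nz] by simp
qed

lemma nn_mult: "nn (r * s) \<le> nn r * nn s"
proof (rule nn_least)
  fix y :: 'a assume y: "y \<noteq> 0"
  have "n0 (r * s * y) = n0 (r * (s * y))" by (simp add: mult.assoc)
  also have "\<dots> \<le> nn r * n0 (s * y)" by (rule nn_key)
  also have "\<dots> \<le> nn r * (nn s * n0 y)" using nn_key nn_nonneg by (rule mult_left_mono)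
  finally show "n0 (r * s * y) / n0 y \<le> nn r * nn s" using n0_pos[OF y] by (simp add: divide_le_eq mult_ac)
qed

lemma nn_add: "nn (r + s) \<le> max (nn r) (nn s)"
proof (rule nn_least)
  fix y :: 'a assume y: "y \<noteq> 0"
  have "n0 ((r + s) * y) = n0 (r * y + s * y)" by (simp add: distrib_right)
  also have "\<dots> \<le> max (n0 (r * y)) (n0 (s * y))" by (rule n0_add)
  also have "\<dots> \<le> max (nn r * n0 y) (nn s * n0 y)" using nn_key by (intro max.mono)
  also have "\<dots> = max (nn r) (nn s) * n0 y" using n0_nonneg by (simp add: max_mult_distrib_right)
  finally show "n0 ((r + s) * y) / n0 y \<le> max (nn r) (nn s)" using n0_pos[OF y] by (simp add: divide_le_eq)
qed

lemma nn_neg: "nn (- r) = nn r"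
proof -
  have "\<And>y. n0 (- r * y) = n0 (r * y)" by (simp add: n0_neg)
  then show ?thesis unfolding NN_def by simp
qed

lemma nn_zero_iff: "nn r = 0 \<longleftrightarrow> r = 0"
proof
  assume "nn r = 0"
  then have "nrm r / K \<le> 0" using nn_ge[of r] by simp
  then have "nrm r \<le> 0" using K1 by (simp add: divide_le_0_iff)
  then show "r = 0" using rn_nonneg[OF rn, of r] rn_zero_iff[OF rn, of r] by linarith
next
  assume "r = 0"
  then show "nn r = 0" using nn_le[of 0] nn_nonneg[of 0] rn_zero[OF rn] by simp
qed

lemma nn_w: "nn (w * r) = nrm w * nn r"
proof (rule antisym)
  show "nn (w * r) \<le> nrm w * nn r"
  proof (rule nn_least)
    fix y :: 'a assume y: "y \<noteq> 0"
    have "n0 (w * r * y) = nrm w * n0 (r * y)" using n0_w by (simp add: mult.assoc)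
    then have "n0 (w * r * y) / n0 y = nrm w * (n0 (r * y) / n0 y)" by simp
    also have "\<dots> \<le> nrm w * nn r"
      using nn_upper[OF y, of r] w_pos by (intro mult_left_mono) auto
    finally show "n0 (w * r * y) / n0 y \<le> nrm w * nn r" .
  qed
  have "nn r \<le> nn (w * r) / nrm w"
  proof (rule nn_least)
    fix y :: 'a assume y: "y \<noteq> 0"
    have "n0 (w * r * y) = nrm w * n0 (r * y)" using n0_w by (simp add: mult.assoc)
    then have "nrm w * (n0 (r * y) / n0 y) \<le> nn (w * r)" using nn_upper[OF y, of "w * r"] by simp
    then show "n0 (r * y) / n0 y \<le> nn (w * r) / nrm w" using w_pos by (simp add: field_simps)
  qed
  then show "nrm w * nn r \<le> nn (w * r)" using w_pos by (simp add: field_simps)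
qed

lemma nn_phi: "x \<in> Zp p \<Longrightarrow> nn (\<phi> x) \<le> c ^ zp_ord p x"
  by (rule nn_least) (use n0_phi n0_pos in \<open>simp add: divide_le_eq\<close>)

end



context L2 begin

lemma final:
  assumes cpl: "norm_complete nrm"
  shows "\<exists>nrm' :: 'a \<Rightarrow> real.
           banach_tate_Zp_algebra p nrm' \<phi> \<and>
           (\<exists>s::real. s > 0 \<and> bounded_equivalent (\<lambda>r. nrm r powr s) nrm') \<and>
           mult_pseudo_uniformizer nrm' w"
proof -
  define s where "s = ln (real p) / ln (1 / c)"
  have lp: "0 < ln (real p)" using p2 by simp
  have lc: "0 < ln (1 / c)" using c0 c1 by simp
  have s0: "0 < s" unfolding s_def using lp lc by simp
  have lnc: "ln (1 / c) = - ln c" using c0 by (simp add: ln_div)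
  have cs: "c powr s = 1 / real p"
  proof -
    have "s * ln c = - ln (real p)" unfolding s_def using lnc lc by (simp add: field_simps)
    then have "c powr s = exp (- ln (real p))" using c0 by (simp add: powr_def)
    also have "\<dots> = 1 / real p" using p2 by (simp add: exp_minus inverse_eq_divide)
    finally show ?thesis .
  qed
  define M where "M = (\<lambda>r. nn r powr s)"
  have rnM: "is_ring_norm M"
    unfolding is_ring_norm_def
  proof (intro conjI allI)
    fix r t :: 'a
    show "0 \<le> M r" unfolding M_def by simp
    show "M r = 0 \<longleftrightarrow> r = 0" unfolding M_def using nn_zero_iff by simp
    show "M (- r) = M r" unfolding M_def using nn_neg by simp
    have "nn (r + t) \<le> nn r \<or> nn (r + t) \<le> nn t" using nn_add[of r t] by linarith
    then have "M (r + t) \<le> M r \<or> M (r + t) \<le> M t"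
      unfolding M_def using nn_nonneg s0 by (auto intro: powr_mono2)
    then show "M (r + t) \<le> max (M r) (M t)" by linarith
    have "M (r * t) \<le> (nn r * nn t) powr s"
      unfolding M_def using nn_mult nn_nonneg s0 by (intro powr_mono2) auto
    also have "\<dots> = M r * M t" unfolding M_def using nn_nonneg by (simp add: powr_mult)
    finally show "M (r * t) \<le> M r * M t" .
    show "M 1 = 1" unfolding M_def using nn_one by simp
  qed
  have le1: "\<And>r. M r \<le> nrm r powr s"
    unfolding M_def using nn_le nn_nonneg s0 by (intro powr_mono2) auto
  have cplM: "norm_complete M"
    unfolding norm_complete_def
  proof (intro allI impI)
    fix X :: "nat \<Rightarrow> 'a"
    assume cau: "\<forall>e>0. \<exists>N. \<forall>m\<ge>N. \<forall>n\<ge>N. M (X m - X n) < e"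
    have "\<forall>e>0. \<exists>N. \<forall>m\<ge>N. \<forall>n\<ge>N. nrm (X m - X n) < e"
    proof (intro allI impI)
      fix e :: real assume e: "e > 0"
      have eK: "e / K > 0" using e K1 by simp
      then have "(e / K) powr s > 0" using e K1 by simp
      then obtain N where N: "\<forall>m\<ge>N. \<forall>n\<ge>N. M (X m - X n) < (e / K) powr s" using cau by blast
      have "\<forall>m\<ge>N. \<forall>n\<ge>N. nrm (X m - X n) < e"
      proof (intro allI impI)
        fix m n assume mn: "m \<ge> N" "n \<ge> N"
        have lt: "nn (X m - X n) < e / K"
        proof (rule ccontr)
          assume "\<not> nn (X m - X n) < e / K"
          then have "e / K \<le> nn (X m - X n)" by simp
          then have "(e / K) powr s \<le> M (X m - X n)" unfolding M_def using eK s0 by (intro powr_mono2) auto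
          then show False using N mn by fastforce
        qed
        have "nrm (X m - X n) / K \<le> nn (X m - X n)" by (rule nn_ge)
        then have "nrm (X m - X n) / K < e / K" using lt by linarith
        then show "nrm (X m - X n) < e" using K1 by (simp add: divide_less_cancel)
      qed
      then show "\<exists>N. \<forall>m\<ge>N. \<forall>n\<ge>N. nrm (X m - X n) < e" by blast
    qed
    then obtain L where L: "(\<lambda>n. nrm (X n - L)) \<longlonglongrightarrow> 0" using cpl unfolding norm_complete_def by blast
    have h: "(\<lambda>n. nrm (X n - L) powr s) \<longlonglongrightarrow> 0"
      by (rule tendsto_zero_powrI[OF L tendsto_const]) (use rn_nonneg[OF rn] s0 in auto)
    have "(\<lambda>n. M (X n - L)) \<longlonglongrightarrow> 0"
    proof (rule tendsto_sandwich[OF _ _ tendsto_const h])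
      show "\<forall>\<^sub>F n in sequentially. 0 \<le> M (X n - L)" unfolding M_def by simp
      show "\<forall>\<^sub>F n in sequentially. M (X n - L) \<le> nrm (X n - L) powr s" using le1 by simp
    qed
    then show "\<exists>L. (\<lambda>n. M (X n - L)) \<longlonglongrightarrow> 0" by blast
  qed
  have nnw: "nn w = nrm w" using nn_w[of 1] nn_one by simp
  have wlt: "nrm w < 1" using mpu by (simp add: mult_pseudo_uniformizer_def)
  have mpuM: "mult_pseudo_uniformizer M w"
    unfolding mult_pseudo_uniformizer_def
  proof (intro conjI allI)
    show "w dvd 1" using mpu by (simp add: mult_pseudo_uniformizer_def)
    have "nrm w powr s < 1 powr s" using w_pos wlt s0 by (intro powr_less_mono2) auto
    then show "M w < 1" unfolding M_def nnw by simp
    fix t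
    show "M (w * t) = M w * M t" unfolding M_def nn_w nnw
      using w_pos nn_nonneg by (simp add: powr_mult)
  qed
  have bd: "\<forall>x\<in>Zp p. M (\<phi> x) \<le> padic_norm p x"
  proof
    fix x assume x: "x \<in> Zp p"
    show "M (\<phi> x) \<le> padic_norm p x"
    proof (cases "x = zp_zero p")
      case True
      then show ?thesis unfolding M_def using phi_zero[OF p2 hom] nn_zero_iff
        by (simp add: padic_norm_def)
    next
      case False
      define o' where "o' = zp_ord p x"
      have "M (\<phi> x) \<le> (c ^ o') powr s"
        unfolding M_def o'_def using nn_phi[OF x] nn_nonneg s0 by (intro powr_mono2) auto
      also have "\<dots> = (c powr real o') powr s" using c0 by (simp add: powr_realpow)
      also have "\<dots> = (c powr s) powr real o'" by (simp add: powr_powr mult.commute)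
      also have "\<dots> = (1 / real p) powr real o'" using cs by simp
      also have "\<dots> = real p powr (- real o')" using p2 by (simp add: powr_divide powr_minus_divide)
      also have "\<dots> = padic_norm p x" using False unfolding o'_def by (simp add: padic_norm_def)
      finally show ?thesis .
    qed
  qed
  have beq: "bounded_equivalent (\<lambda>r. nrm r powr s) M"
    unfolding bounded_equivalent_def
  proof (intro exI conjI allI)
    show "(1 / K) powr s > 0" using K1 by simp
    show "(0::real) < 1" by simp
    fix r
    show "M r \<le> 1 * nrm r powr s" using le1 by simp
    have "(1 / K) powr s * nrm r powr s = (nrm r / K) powr s"
      using K1 rn_nonneg[OF rn] by (simp add: powr_mult[symmetric])
    also have "\<dots> \<le> M r" unfolding M_def using nn_ge s0 K1 rn_nonneg[OF rn] by (intro powr_mono2) auto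
    finally show "(1 / K) powr s * nrm r powr s \<le> M r" .
  qed
  have "banach_tate_Zp_algebra p M \<phi>"
    unfolding banach_tate_Zp_algebra_def banach_tate_ring_def
    using rnM cplM mpuM hom bd by blast
  then show ?thesis using beq mpuM s0 by blast
qed

end

theorem mainTheorem3:
  fixes nrm :: "'a::comm_ring_1 \<Rightarrow> real"
    and w :: 'a
    and p :: nat
    and \<phi> :: "(nat \<Rightarrow> int) \<Rightarrow> 'a"
  assumes "prime p"
    and "noetherian_ring TYPE('a)"
    and "banach_tate_ring nrm"
    and "mult_pseudo_uniformizer nrm w"
    and "zp_ring_hom p \<phi>"
    and "zp_continuous p nrm \<phi>"
  shows "\<exists>nrm' :: 'a \<Rightarrow> real.
           banach_tate_Zp_algebra p nrm' \<phi> \<and>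
           (\<exists>s::real. s > 0 \<and> bounded_equivalent (\<lambda>r. nrm r powr s) nrm') \<and>
           mult_pseudo_uniformizer nrm' w"
proof -
  have p2: "p \<ge> 2" using assms(1) by (rule prime_ge_2_nat)
  have rn: "is_ring_norm nrm" and cpl: "norm_complete nrm"
    using assms(3) by (auto simp: banach_tate_ring_def)
  interpret l1: L1 nrm \<phi> p using p2 rn assms(5,6) by unfold_locales
  obtain c K where cK: "0 < c" "c < 1" "K \<ge> 1" "\<forall>x\<in>Zp p. nrm (\<phi> x) \<le> K * c ^ zp_ord p x"
    using l1.exck by blast
  interpret l2: L2 nrm \<phi> p w c K using p2 rn assms(5,4) cK by unfold_locales
  show ?thesis by (rule l2.final[OF cpl])
qed



end
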